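(* Let $m\ge2$, $a,b\in(0,1/m)$, $f=f_{a,b}$, $X=X_{a,b}$, and $\delta>0$. Let $\mu$ be an ergodic $f$-invariant Borel probability measure which is $\delta$-biased and satisfies $\mu(X)=1$. Then $\chi^u(\mu)\le(1+2\delta)H(a)$, where $H(a)=-\log\sqrt{a(1-ma)}$.
   Context: $F_a(x)=\frac{x-(i-1)a}{a}$ on $[(i-1)a,ia)$, $i\in\{1,\ldots,m\}$, $F_a(x)=\frac{x-ma}{1-ma}$ on $[ma,1]$. $\Omega_i^+=[(i-1)a,ia)\times[0,1]$ for $i\le m$; $\Omega_i^+=[ma,1]\times[\frac{i-m-1}{m},\frac{i-m}{m})$ for $m+1\le i\le2m-1$; $\Omega_{2m}^+=[ma,1]\times[\frac{m-1}{m},1]$. $f_a(x,y)=(F_a(x),\frac{y}{m}+\frac{i-1}{m})$ on $\Omega_i^+$ for $i\le m$, $f_a(x,y)=(F_a(x),my-i+m+1)$ on $\Omega_i^+$ for $i\ge m+1$. $\Omega_i=\Omega_i^+\times[0,1]$, $f_{a,b}(x,y,z)=(f_a(x,y),(1-mb)z)$ on $\Omega_i$ for $i\le m$, $f_{a,b}(x,y,z)=(f_a(x,y),bz+1-mb+b(i-m-1))$ on $\Omega_i$ for $i\ge m+1$. $X_{a,b}=\bigcap_{n\in\mathbb Z}f_{a,b}^{-n}(\bigcup_i\mathrm{int}\,\Omega_i)$; for $p\in X$ let $(\omega_n)_{n\in\mathbb Z}$ be the unique sequence with $f^n(p)\in\mathrm{int}\,\Omega_{\omega_n}$. Define $\psi^u\colon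 X\to\mathbb R$ by $\psi^u(p)=-\log a$ if $\omega_0\le m$ and $\psi^u(p)=-\log(1-ma)$ if $\omega_0\ge m+1$; for $\mu$ with $\mu(X)=1$, the unstable Lyapunov exponent is $\chi^u(\mu)=\int_X\psi^u\,d\mu$. For $\delta\ge0$, an $f$-invariant Borel probability measure $\mu$ is $\delta$-biased if $\mu(X)=1$ and $\big|\mu(\bigcup_{i=1}^m\Omega_i)-\mu(\bigcup_{i=m+1}^{2m}\Omega_i)\big|\le\delta$. *)

theory Defs
  imports "HOL-Probability.Probability"
begin

definition Omega_plus :: "nat \<Rightarrow> real \<Rightarrow> nat \<Rightarrow> (real \<times> real) set" where
  "Omega_plus m a i =
     (if i \<le> m then {(real i - 1) * a ..< real i * a} \<times> {0..1}
      else if i \<le> 2*m - 1 then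
        {real m * a .. 1} \<times> {(real i - real m - 1) / real m ..< (real i - real m) / real m}
      else {real m * a .. 1} \<times> {(real m - 1) / real m .. 1})"

definition Omega :: "nat \<Rightarrow> real \<Rightarrow> nat \<Rightarrow> (real \<times> real \<times> real) set" where
  "Omega m a i = {(x, y, z). (x, y) \<in> Omega_plus m a i \<and> z \<in> {0..1}}"

definition f_piece :: "nat \<Rightarrow> real \<Rightarrow> real \<Rightarrow> nat \<Rightarrow> real \<times> real \<times> real \<Rightarrow> real \<times> real \<times> real" where
  "f_piece m a b i p = (case p of (x, y, z) \<Rightarrow>
     (if i \<le> m then
        ((x - (real i - 1) * a) / a, y / real m + (real i - 1) / real m, (1 - real m * b) * z)
      else
        ((x - real m * a) / (1 - real m * a), real m * y - real i + real m + 1,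
         b * z + 1 - real m * b + b * (real i - real m - 1))))"

text \<open>\<open>f_{a,b}\<close> on the cube \<open>[0,1]^3\<close> (the union of the \<open>\<Omega>_i\<close>); extended by the identity
  outside the cube (irrelevant for measures with \<open>\<mu>(X)=1\<close>).\<close>
definition f_ab :: "nat \<Rightarrow> real \<Rightarrow> real \<Rightarrow> real \<times> real \<times> real \<Rightarrow> real \<times> real \<times> real" where
  "f_ab m a b p =
     (if \<exists>i\<in>{1..2*m}. p \<in> Omega m a i
      then f_piece m a b (THE i. i \<in> {1..2*m} \<and> p \<in> Omega m a i) p
      else p)"

definition U_ab :: "nat \<Rightarrow> real \<Rightarrow> (real \<times> real \<times> real) set" where
  "U_ab m a = (\<Union>i\<in>{1..2*m}. interior (Omega m a i))"

text \<open>\<open>X = \<Inter>_{n\<in>\<int>} f^{-n}(U)\<close>: for \<open>n \<ge> 0\<close> the preimage under \<open>f^n\<close>, for \<open>n<0\<close> the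
  image under \<open>f^{|n|}\<close> (f is injective on the cube).\<close>
definition X_ab :: "nat \<Rightarrow> real \<Rightarrow> real \<Rightarrow> (real \<times> real \<times> real) set" where
  "X_ab m a b = {p. \<forall>k::nat. (f_ab m a b ^^ k) p \<in> U_ab m a \<and> p \<in> (f_ab m a b ^^ k) ` U_ab m a}"

definition psi_u :: "nat \<Rightarrow> real \<Rightarrow> real \<times> real \<times> real \<Rightarrow> real" where
  "psi_u m a p = (if p \<in> (\<Union>i\<in>{1..m}. Omega m a i) then - ln a else - ln (1 - real m * a))"

definition chi_u :: "nat \<Rightarrow> real \<Rightarrow> (real \<times> real \<times> real) measure \<Rightarrow> real" where
  "chi_u m a M = integral\<^sup>L M (psi_u m a)"

definition f_invariant :: "('a \<Rightarrow> 'a) \<Rightarrow> 'a measure \<Rightarrow> bool" where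
  "f_invariant f M \<longleftrightarrow> f \<in> M \<rightarrow>\<^sub>M M \<and> distr M M f = M"

definition ergodic :: "('a \<Rightarrow> 'a) \<Rightarrow> 'a measure \<Rightarrow> bool" where
  "ergodic f M \<longleftrightarrow> f_invariant f M \<and>
     (\<forall>A \<in> sets M. f -` A \<inter> space M = A \<longrightarrow> measure M A = 0 \<or> measure M A = 1)"

definition delta_biased :: "nat \<Rightarrow> real \<Rightarrow> real \<Rightarrow> real \<Rightarrow> (real \<times> real \<times> real) measure \<Rightarrow> bool" where
  "delta_biased m a b \<delta> M \<longleftrightarrow>
     f_invariant (f_ab m a b) M \<and> measure M (X_ab m a b) = 1 \<and>
     \<bar>measure M (\<Union>i\<in>{1..m}. Omega m a i) - measure M (\<Union>i\<in>{m+1..2*m}. Omega m a i)\<bar> \<le> \<delta>"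

definition H_a :: "nat \<Rightarrow> real \<Rightarrow> real" where
  "H_a m a = - ln (sqrt (a * (1 - real m * a)))"

end

theory Submission
  imports Defs
begin

lemma Omega_borel: "Omega m a i \<in> sets borel"
proof -
  have "Omega m a i = (\<lambda>p::real\<times>real\<times>real. ((fst p, fst (snd p)), snd (snd p))) -` (Omega_plus m a i \<times> {0..1})"
    by (auto simp: Omega_def)
  moreover have "Omega_plus m a i \<in> sets (borel :: (real\<times>real) measure)"
    unfolding Omega_plus_def borel_prod[symmetric] by (auto intro!: pair_measureI)
  hence "Omega_plus m a i \<times> {0..1} \<in> sets (borel :: ((real\<times>real)\<times>real) measure)"
    unfolding borel_prod[symmetric] by (auto intro!: pair_measureI)
  moreover have "(\<lambda>p::real\<times>real\<times>real. ((fst p, fst (snd p)), snd (snd p))) \<in> borel_measurable borel"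
    by (intro borel_measurable_continuous_onI continuous_intros)
  ultimately show ?thesis
    using measurable_sets[of "\<lambda>p::real\<times>real\<times>real. ((fst p, fst (snd p)), snd (snd p))" borel borel "Omega_plus m a i \<times> {0..1}"]
    by simp
qed

theorem lemma3p6:
  fixes m :: nat and a b \<delta> :: real and M :: "(real \<times> real \<times> real) measure"
  assumes "m \<ge> 2"
    and "0 < a" "a < 1 / real m" "0 < b" "b < 1 / real m"
    and "\<delta> > 0"
    and "prob_space M" "sets M = sets borel"
    and "f_invariant (f_ab m a b) M"
    and "ergodic (f_ab m a b) M"
    and "delta_biased m a b \<delta> M"
    and "measure M (X_ab m a b) = 1"
  shows "chi_u m a M \<le> (1 + 2 * \<delta>) * H_a m a"
proof -
  interpret P: prob_space M by fact
  define S1 where "S1 = (\<Union>i\<in>{1..m}. Omega m a i)"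
  define S2 where "S2 = (\<Union>i\<in>{m+1..2*m}. Omega m a i)"
  have S1M: "S1 \<in> sets M" unfolding S1_def using assms(8) Omega_borel by auto
  have S2M: "S2 \<in> sets M" unfolding S2_def using assms(8) Omega_borel by auto
  have ma: "real m * a < 1" using assms(2,3,1) by (simp add: field_simps)
  have disj: "S1 \<inter> S2 = {}"
  proof -
    have "fst p < real m * a" if "p \<in> S1" for p
    proof -
      from that obtain i where i: "i \<in> {1..m}" "p \<in> Omega m a i" unfolding S1_def by auto
      hence "fst p < real i * a" by (auto simp: Omega_def Omega_plus_def)
      also have "\<dots> \<le> real m * a" using i(1) assms(2) by (auto intro!: mult_right_mono)
      finally show ?thesis .
    qed
    moreover have "fst p \<ge> real m * a" if "p \<in> S2" for p
      using that unfolding S2_def by (auto simp: Omega_def Omega_plus_def split: if_splits)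
    ultimately show ?thesis by force
  qed
  have XM: "X_ab m a b \<in> sets M" using assms(12) measure_notin_sets by fastforce
  have "X_ab m a b \<subseteq> U_ab m a" unfolding X_ab_def by (auto dest: spec[of _ 0])
  also have "U_ab m a \<subseteq> S1 \<union> S2"
  proof
    fix p assume "p \<in> U_ab m a"
    then obtain i where i: "i \<in> {1..2*m}" "p \<in> Omega m a i"
      unfolding U_ab_def using interior_subset by blast
    show "p \<in> S1 \<union> S2"
    proof (cases "i \<le> m")
      case True thus ?thesis using i unfolding S1_def by auto
    next
      case False thus ?thesis using i unfolding S2_def by auto
    qed
  qed
  finally have XS: "X_ab m a b \<subseteq> S1 \<union> S2" .
  have "1 \<le> measure M (S1 \<union> S2)"
    using P.finite_measure_mono[OF XS] S1M S2M assms(12) by auto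
  hence sum1: "measure M S1 + measure M S2 = 1"
    using P.finite_measure_Union[OF S1M S2M disj] P.prob_le_1[of "S1 \<union> S2"] by simp
  have bias: "\<bar>measure M S1 - measure M S2\<bar> \<le> \<delta>"
    using assms(11) unfolding delta_biased_def S1_def S2_def by simp
  define A where "A = - ln a"
  define B where "B = - ln (1 - real m * a)"
  have a1: "a < 1" using assms(1,3) by (smt (verit) ma mult_le_cancel_right1 of_nat_1 of_nat_le_iff one_le_numeral assms(2))
  have Apos: "A > 0" unfolding A_def using assms(2) a1 by simp
  have mpos: "0 < real m * a" using assms(1,2) by simp
  have Bpos: "B > 0" unfolding B_def using mpos ma by simp
  have psi: "psi_u m a = (\<lambda>p. A * indicator S1 p + B * (1 - indicator S1 p))"
    by (auto simp: psi_u_def S1_def A_def B_def fun_eq_iff indicator_def)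
  have ind: "integral\<^sup>L M (indicator S1 :: _ \<Rightarrow> real) = measure M S1"
    using S1M by simp
  have iint: "integrable M (indicator S1 :: _ \<Rightarrow> real)"
    using S1M integrable_indicator[of S1 M "1::real"] by (simp add: P.emeasure_eq_measure)
  have "(\<lambda>p. A * indicator S1 p + B * (1 - indicator S1 p)) = (\<lambda>p. B + (A - B) * (indicator S1 p :: real))"
    by (auto simp: fun_eq_iff algebra_simps)
  hence chi: "chi_u m a M = A * measure M S1 + B * (1 - measure M S1)"
    unfolding chi_u_def psi using iint ind P.prob_space
    by (simp add: Bochner_Integration.integral_add algebra_simps)
  have H: "H_a m a = (A + B) / 2"
  proof -
    have "ln (a * (1 - real m * a)) = ln a + ln (1 - real m * a)"
      using assms(2) ma by (intro ln_mult_pos) auto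
    moreover have "ln (sqrt (a * (1 - real m * a))) = ln (a * (1 - real m * a)) / 2"
      using assms(2) ma by (intro ln_sqrt) auto
    ultimately show ?thesis unfolding H_a_def A_def B_def by simp
  qed
  have p1: "measure M S1 \<le> (1 + \<delta>) / 2" using sum1 bias by (simp add: abs_le_iff field_simps)
  have p2: "1 - measure M S1 \<le> (1 + \<delta>) / 2" using sum1 bias by (simp add: abs_le_iff field_simps)
  have "A * measure M S1 \<le> A * ((1 + 2*\<delta>)/2)" using p1 Apos assms(6) by (intro mult_left_mono) auto
  moreover have "B * (1 - measure M S1) \<le> B * ((1 + 2*\<delta>)/2)" using p2 Bpos assms(6) by (intro mult_left_mono) auto
  ultimately show ?thesis unfolding chi H by (simp add: field_simps)
qed

end
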